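(* Let $n,\ell$ be positive integers and $0<\epsilon<0.5$. Let $\boldsymbol{c}\in\mathbb{Z}_2^n$ be "0"-$3$-dominant and $\ell$-run-length limited, and let $\boldsymbol{d}\in\mathbb{Z}_2^n$ be $\epsilon$-balanced. Then the DNA sequence $\tau^{-1}(\boldsymbol{c}\|\boldsymbol{d})$ is $3$-SSA, $\ell$-run-length limited and GC-$\epsilon$-balanced.
   Context: $\Sigma_{\rm DNA}=\{\mathrm{A},\mathrm{T},\mathrm{C},\mathrm{G}\}$ with complement $\overline{\mathrm A}=\mathrm T$, $\overline{\mathrm T}=\mathrm A$, $\overline{\mathrm C}=\mathrm G$, $\overline{\mathrm G}=\mathrm C$; the reverse-complement of $(x_1,\dots,x_n)$ is $(\overline{x_n},\dots,\overline{x_1})$. A DNA sequence is $m$-SSA if it has no two non-overlapping blocks of consecutive symbols of length $\ge m$ that are reverse-complements of each other. A binary sequence is "0"-$m$-dominant if every block of $m$ consecutive symbols contains more than $m/2$ zeros. A sequence is $\ell$-run-length limited if every maximal run of identical consecutive symbols has length at most $\ell$. A binary $\boldsymbol{d}\in\mathbb{Z}_2^n$ is $\epsilon$-balanced if $|\mathrm{wt}(\boldsymbol{d})/n-0.5|\le\epsilon$ (Hamming weight). For $\boldsymbol{x}\in\Sigma_{\rm DNA}^n$, $\mathrm{wt}_{\rm GC}(\boldsymbol{x})$ is the number of positions equal to G or C, and $\boldsymbol{x}$ is GC-$\epsilon$-balanced if $|\mathrm{wt}_{\rm GC}(\boldsymbol{x})/n-0.5|\le\epsilon$. $\tau(\mathrm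 T)=00$, $\tau(\mathrm C)=01$, $\tau(\mathrm A)=10$, $\tau(\mathrm G)=11$, extended symbolwise; for $\boldsymbol{x},\boldsymbol{y}\in\mathbb{Z}_2^n$, $\boldsymbol{x}\|\boldsymbol{y}=(x_1y_1,\dots,x_ny_n)$. *)

theory Defs
  imports Complex_Main
begin

datatype dna = A | T | C | G

fun comp :: "dna \<Rightarrow> dna" where
  "comp A = T" | "comp T = A" | "comp C = G" | "comp G = C"

definition revcomp :: "dna list \<Rightarrow> dna list" where
  "revcomp xs = rev (map comp xs)"

(* Binary sequences over Z_2 are bool lists: False = 0, True = 1. *)

fun tau :: "dna \<Rightarrow> bool \<times> bool" where
  "tau T = (False, False)" | "tau C = (False, True)"
| "tau A = (True, False)" | "tau G = (True, True)"

fun tau_inv :: "bool \<times> bool \<Rightarrow> dna" where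
  "tau_inv (False, False) = T" | "tau_inv (False, True) = C"
| "tau_inv (True, False) = A" | "tau_inv (True, True) = G"

definition interleave :: "bool list \<Rightarrow> bool list \<Rightarrow> (bool \<times> bool) list" where
  "interleave x y = zip x y"

definition tau_inv_seq :: "(bool \<times> bool) list \<Rightarrow> dna list" where
  "tau_inv_seq ps = map tau_inv ps"

(* block of length k starting at (0-based) position i *)
definition block :: "'a list \<Rightarrow> nat \<Rightarrow> nat \<Rightarrow> 'a list" where
  "block x i k = take k (drop i x)"

definition SSA :: "nat \<Rightarrow> dna list \<Rightarrow> bool" where
  "SSA m x \<longleftrightarrow> (\<forall>i j k. m \<le> k \<longrightarrow> i + k \<le> length x \<longrightarrow> j + k \<le> length x
      \<longrightarrow> (i + k \<le> j \<or> j + k \<le> i) \<longrightarrow> block x j k \<noteq> revcomp (block x i k))"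

definition zero_dominant :: "nat \<Rightarrow> bool list \<Rightarrow> bool" where
  "zero_dominant m x \<longleftrightarrow> (\<forall>i. i + m \<le> length x \<longrightarrow>
      real (length (filter (\<lambda>b. \<not> b) (block x i m))) > real m / 2)"

(* l-run-length limited: every run of identical consecutive symbols x_i..x_j
   (in particular every maximal run) has length at most l *)
definition rll :: "nat \<Rightarrow> 'a list \<Rightarrow> bool" where
  "rll l x \<longleftrightarrow> (\<forall>i j. i \<le> j \<longrightarrow> j < length x \<longrightarrow>
      (\<forall>k. i \<le> k \<and> k \<le> j \<longrightarrow> x ! k = x ! i) \<longrightarrow> j - i + 1 \<le> l)"

definition wt :: "bool list \<Rightarrow> nat" where
  "wt x = length (filter (\<lambda>b. b) x)"

definition balanced :: "real \<Rightarrow> bool list \<Rightarrow> bool" where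
  "balanced \<epsilon> d \<longleftrightarrow> \<bar>real (wt d) / real (length d) - 1/2\<bar> \<le> \<epsilon>"

definition wt_GC :: "dna list \<Rightarrow> nat" where
  "wt_GC x = length (filter (\<lambda>s. s = G \<or> s = C) x)"

definition GC_balanced :: "real \<Rightarrow> dna list \<Rightarrow> bool" where
  "GC_balanced \<epsilon> x \<longleftrightarrow> \<bar>real (wt_GC x) / real (length x) - 1/2\<bar> \<le> \<epsilon>"

end

theory Submission
  imports Defs
begin

lemma tau_inv_fst: "tau_inv (a,b) = tau_inv (a',b') \<Longrightarrow> a = a'"
  by (cases a; cases b; cases a'; cases b'; simp)

lemma comp_tau_inv: "comp (tau_inv (a,b)) = tau_inv (\<not>a, b)"
  by (cases a; cases b; simp)

lemma blk3: "p + 3 \<le> length xs \<Longrightarrow> block xs p 3 = [xs!p, xs!(p+1), xs!(p+2)]"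
proof -
  assume h: "p + 3 \<le> length xs"
  have "drop p xs = xs!p # drop (Suc p) xs" using h by (simp add: Cons_nth_drop_Suc)
  moreover have "drop (Suc p) xs = xs!(p+1) # drop (Suc (Suc p)) xs" using h by (simp add: Cons_nth_drop_Suc)
  moreover have "drop (Suc (Suc p)) xs = xs!(p+2) # drop (Suc (Suc (Suc p))) xs" using h
    by (simp add: Cons_nth_drop_Suc numeral_2_eq_2)
  ultimately show ?thesis by (simp add: block_def numeral_3_eq_3)
qed

lemma zd3:
  assumes "zero_dominant 3 c" "p + 3 \<le> length c"
  shows "\<not>(c!p \<and> c!(p+1)) \<and> \<not>(c!p \<and> c!(p+2)) \<and> \<not>(c!(p+1) \<and> c!(p+2))"
proof -
  have "real (length (filter (\<lambda>b. \<not> b) (block c p 3))) > real 3 / 2"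
    using assms unfolding zero_dominant_def by blast
  then show ?thesis using blk3[OF assms(2)]
    by (cases "c!p"; cases "c!(p+1)"; cases "c!(p+2)"; simp)
qed

lemma gc_count: "length c = length d \<Longrightarrow>
  length (filter (\<lambda>s. s = G \<or> s = C) (map tau_inv (zip c d))) = length (filter (\<lambda>b. b) d)"
proof (induction c d rule: list_induct2)
  case Nil then show ?case by simp
next
  case (Cons x xs y ys) then show ?case by (cases x; cases y; simp)
qed

theorem lemma4:
  fixes n l :: nat and \<epsilon> :: real and c d :: "bool list"
  assumes "n > 0" and "l > 0" and "0 < \<epsilon>" and "\<epsilon> < 1/2"
    and "length c = n" and "length d = n"
    and "zero_dominant 3 c" and "rll l c"
    and "balanced \<epsilon> d"
  shows "SSA 3 (tau_inv_seq (interleave c d)) \<and> rll l (tau_inv_seq (interleave c d))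
         \<and> GC_balanced \<epsilon> (tau_inv_seq (interleave c d))"
proof -
  define xs where "xs = tau_inv_seq (interleave c d)"
  have len: "length xs = n" using assms(5,6) by (simp add: xs_def tau_inv_seq_def interleave_def)
  have nth: "\<And>k. k < n \<Longrightarrow> xs!k = tau_inv (c!k, d!k)"
    using assms(5,6) by (simp add: xs_def tau_inv_seq_def interleave_def)
  have ssa: "SSA 3 xs"
    unfolding SSA_def
  proof (intro allI impI notI)
    fix i j k
    assume k: "3 \<le> k" and ik: "i + k \<le> length xs" and jk: "j + k \<le> length xs"
      and eq: "block xs j k = revcomp (block xs i k)"
    have rel: "c!(j+t) = (\<not> c!(i+k-1-t))" if t: "t < k" for t
    proof -
      have "block xs j k ! t = xs!(j+t)" using t jk by (simp add: block_def)
      moreover have "revcomp (block xs i k) ! t = comp (xs!(i+k-1-t))"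
      proof -
        have L: "length (take k (drop i xs)) = k" using ik by simp
        have "revcomp (block xs i k) ! t = map comp (take k (drop i xs)) ! (k - Suc t)"
          using t L by (simp add: revcomp_def block_def rev_nth)
        also have "\<dots> = comp (xs!(i+k-1-t))" using t ik by simp
        finally show ?thesis .
      qed
      ultimately have "xs!(j+t) = comp (xs!(i+k-1-t))" using eq by simp
      then have "tau_inv (c!(j+t), d!(j+t)) = tau_inv (\<not> c!(i+k-1-t), d!(i+k-1-t))"
      proof -
        have a: "j+t < n" using t jk len by simp
        have b: "i+k-1-t < n" using t ik len by simp
        show ?thesis using \<open>xs!(j+t) = comp (xs!(i+k-1-t))\<close> nth[OF a] nth[OF b]
          by (simp add: comp_tau_inv)
      qed
      then show ?thesis by (rule tau_inv_fst)
    qed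
    have z1: "\<not>(c!j \<and> c!(j+1)) \<and> \<not>(c!j \<and> c!(j+2)) \<and> \<not>(c!(j+1) \<and> c!(j+2))"
      using zd3[OF assms(7)] jk k len assms(5) by simp
    obtain q where q: "q + 3 = i + k" using k by (intro that[of "i+k-3"]) linarith
    have z2: "\<not>(c!q \<and> c!(q+1)) \<and> \<not>(c!q \<and> c!(q+2)) \<and> \<not>(c!(q+1) \<and> c!(q+2))"
      using zd3[OF assms(7), of q] ik q len assms(5) by simp
    have r0: "c!j = (\<not> c!(q+2))"
    proof -
      have e: "i+k-1-0 = q+2" using q by linarith
      have "0 < k" using k by linarith
      from rel[OF this] show ?thesis unfolding e by simp
    qed
    have r1: "c!(j+1) = (\<not> c!(q+1))"
    proof -
      have e: "i+k-1-1 = q+1" using q by linarith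
      have "1 < k" using k by linarith
      from rel[OF this] show ?thesis unfolding e .
    qed
    have r2: "c!(j+2) = (\<not> c!q)"
    proof -
      have e: "i+k-1-2 = q" using q by linarith
      have "2 < k" using k by linarith
      from rel[OF this] show ?thesis unfolding e .
    qed
    show False using z1 z2 r0 r1 r2 by blast
  qed
  have rl: "rll l xs"
    unfolding rll_def
  proof (intro allI impI)
    fix i j assume ij: "i \<le> j" "j < length xs" and all: "\<forall>k. i \<le> k \<and> k \<le> j \<longrightarrow> xs ! k = xs ! i"
    have "\<forall>k. i \<le> k \<and> k \<le> j \<longrightarrow> c ! k = c ! i"
    proof (intro allI impI)
      fix m assume m: "i \<le> m \<and> m \<le> j"
      have "m < n" "i < n" using m ij len by auto
      then have "tau_inv (c!m, d!m) = tau_inv (c!i, d!i)"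
      proof -
        have "xs!m = xs!i" using all m by blast
        moreover have "xs!m = tau_inv (c!m, d!m)" using nth \<open>m < n\<close> by blast
        moreover have "xs!i = tau_inv (c!i, d!i)" using nth \<open>i < n\<close> by blast
        ultimately show ?thesis by simp
      qed
      then show "c!m = c!i" by (rule tau_inv_fst)
    qed
    moreover have "j < length c" using ij len assms(5) by simp
    ultimately show "j - i + 1 \<le> l"
      using assms(8)[unfolded rll_def, rule_format, OF ij(1)] by blast
  qed
  have "wt_GC xs = wt d" using gc_count[of c d] assms(5,6)
    by (simp add: wt_GC_def wt_def xs_def tau_inv_seq_def interleave_def)
  then have gc: "GC_balanced \<epsilon> xs" using assms(9) len assms(6)
    by (simp add: GC_balanced_def balanced_def)
  show ?thesis using ssa rl gc unfolding xs_def by blast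
qed

end
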